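(* Let $G$ be a connected graph with $12$ vertices. Suppose one of the following holds: (1) $\Delta(G)=11$ and $e(G)=12+k$ for some $1\le k\le 8$; (2) $\Delta(G)=10$ and $e(G)=12+k$ for some $4\le k\le 8$; (3) $\Delta(G)=9$ and $e(G)=12+k$ for some $7\le k\le 8$. Then $R(G)>\sqrt{11}+\frac{2(k+1)}{12\sqrt{11}}$.
   Context: All graphs are finite and simple; $e(G)$ is the number of edges and $\Delta(G)$ the maximum degree. For a vertex $u$, $d(u)$ is its degree. The Randić index is $R(G)=\sum_{\{u,v\}\in E(G)} \frac{1}{\sqrt{d(u)d(v)}}$. *)

theory Defs
  imports Complex_Main
begin

definition simple_graph :: "'a set \<Rightarrow> 'a set set \<Rightarrow> bool" where
  "simple_graph V E \<longleftrightarrow> finite V \<and> (\<forall>e\<in>E. e \<subseteq> V \<and> card e = 2)"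

definition degree :: "'a set set \<Rightarrow> 'a \<Rightarrow> nat" where
  "degree E u = card {e\<in>E. u \<in> e}"

definition max_degree :: "'a set \<Rightarrow> 'a set set \<Rightarrow> nat" where
  "max_degree V E = Max (degree E ` V)"

definition adj :: "'a set set \<Rightarrow> 'a \<Rightarrow> 'a \<Rightarrow> bool" where
  "adj E u v \<longleftrightarrow> {u, v} \<in> E"

definition connected_graph :: "'a set \<Rightarrow> 'a set set \<Rightarrow> bool" where
  "connected_graph V E \<longleftrightarrow> V \<noteq> {} \<and> (\<forall>u\<in>V. \<forall>v\<in>V. (adj E)\<^sup>*\<^sup>* u v)"

definition randic_index :: "'a set set \<Rightarrow> real" where
  "randic_index E = (\<Sum>e\<in>E. 1 / sqrt (\<Prod>u\<in>e. real (degree E u)))"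

end

theory Submission
  imports Defs
begin

lemma finE: "simple_graph V E \<Longrightarrow> finite E"
proof -
  assume a: "simple_graph V E"
  then have "E \<subseteq> Pow V" "finite V" unfolding simple_graph_def by auto
  then show "finite E" using finite_subset finite_Pow_iff by blast
qed

lemma edge2: "simple_graph V E \<Longrightarrow> e \<in> E \<Longrightarrow> \<exists>x y. e = {x,y} \<and> x \<noteq> y \<and> x \<in> V \<and> y \<in> V"
  unfolding simple_graph_def by (metis card_2_iff insert_subset)

lemma double_count:
  assumes "simple_graph V E"
  shows "(\<Sum>x\<in>V. f x * real (degree E x)) = (\<Sum>e\<in>E. \<Sum>x\<in>e. f x)"
proof -
  have fV: "finite V" using assms unfolding simple_graph_def by blast
  have fE: "finite E" using finE[OF assms] .
  have c: "(\<Sum>e\<in>E. if x \<in> e then f x else 0) = f x * real (degree E x)" for x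
  proof -
    have "(\<Sum>e\<in>E. if x \<in> e then f x else 0) = (\<Sum>e\<in>{e\<in>E. x\<in>e}. f x)"
      by (simp only: sum.inter_filter[OF fE])
    also have "\<dots> = real (card {e\<in>E. x\<in>e}) * f x" by simp
    finally show ?thesis by (simp add: degree_def)
  qed
  have "(\<Sum>x\<in>V. f x * real (degree E x)) = (\<Sum>x\<in>V. \<Sum>e\<in>E. if x \<in> e then f x else 0)"
    using c by simp
  also have "\<dots> = (\<Sum>e\<in>E. \<Sum>x\<in>V. if x \<in> e then f x else 0)"
    by (rule sum.swap)
  also have "\<dots> = (\<Sum>e\<in>E. \<Sum>x\<in>{x\<in>V. x\<in>e}. f x)"
    by (simp only: sum.inter_filter[OF fV])
  also have "\<dots> = (\<Sum>e\<in>E. \<Sum>x\<in>e. f x)"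
  proof (rule sum.cong)
    fix e assume "e \<in> E"
    then have "e \<subseteq> V" using assms unfolding simple_graph_def by blast
    then have "{x\<in>V. x\<in>e} = e" by blast
    then show "(\<Sum>x\<in>{x\<in>V. x\<in>e}. f x) = (\<Sum>x\<in>e. f x)" by simp
  qed simp
  finally show ?thesis .
qed

lemma handshake:
  assumes "simple_graph V E"
  shows "(\<Sum>x\<in>V. real (degree E x)) = 2 * real (card E)"
proof -
  have "(\<Sum>x\<in>V. real (degree E x)) = (\<Sum>x\<in>V. 1 * real (degree E x))" by simp
  also have "\<dots> = (\<Sum>e\<in>E. \<Sum>x\<in>e. (1::real))" by (rule double_count[OF assms])
  also have "\<dots> = (\<Sum>e\<in>E. 2)"
  proof (rule sum.cong)
    fix e assume "e \<in> E"
    then have "card e = 2" using assms unfolding simple_graph_def by blast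
    then show "(\<Sum>x\<in>e. (1::real)) = 2" by simp
  qed simp
  finally show ?thesis by simp
qed

lemma deg_pos:
  assumes "simple_graph V E" "connected_graph V E" "card V \<ge> 2" "v \<in> V"
  shows "degree E v \<ge> 1"
proof -
  have fV: "finite V" using assms unfolding simple_graph_def by blast
  obtain w where w: "w \<in> V" "w \<noteq> v"
  proof -
    have "card (V - {v}) \<ge> 1" using assms fV by simp
    then have "V - {v} \<noteq> {}" by fastforce
    then show ?thesis using that by blast
  qed
  have "(adj E)\<^sup>*\<^sup>* v w" using assms(2) assms(4) w(1) unfolding connected_graph_def by blast
  then obtain x where "adj E v x"
    using w(2) by (metis converse_rtranclpE)
  then have "{v,x} \<in> {e\<in>E. v \<in> e}" by (simp add: adj_def)
  moreover have "finite {e\<in>E. v \<in> e}" using finE[OF assms(1)] by simp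
  ultimately show ?thesis unfolding degree_def
    using not_less_eq_eq by fastforce
qed

lemma deg_sum_le:
  assumes "simple_graph V E" "u \<noteq> v"
  shows "degree E u + degree E v \<le> card E + 1"
proof -
  let ?A = "{e\<in>E. u \<in> e}" and ?B = "{e\<in>E. v \<in> e}"
  have fE: "finite E" using finE[OF assms(1)] .
  have "?A \<inter> ?B \<subseteq> {{u,v}}"
  proof
    fix e assume e: "e \<in> ?A \<inter> ?B"
    then have eE: "e \<in> E" and ue: "u \<in> e" and ve: "v \<in> e" by auto
    obtain x y where xy: "e = {x,y}" "x \<noteq> y" using edge2[OF assms(1) eE] by blast
    have "e = {u,v}" using xy ue ve assms(2) by auto
    then show "e \<in> {{u,v}}" by simp
  qed
  then have "card (?A \<inter> ?B) \<le> card {{u,v}}" by (intro card_mono) auto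
  then have "card (?A \<inter> ?B) \<le> 1" by simp
  moreover have "card (?A \<union> ?B) \<le> card E" using fE by (intro card_mono) auto
  moreover have "card ?A + card ?B = card (?A \<union> ?B) + card (?A \<inter> ?B)"
    using fE by (intro card_Un_Int) auto
  ultimately show ?thesis unfolding degree_def by linarith
qed

lemma frac_helper:
  fixes c p :: real
  assumes "0 \<le> c" "c^2 \<le> p" "0 < p"
  shows "c / p \<le> 1 / sqrt p"
proof -
  have "c \<le> sqrt p" using real_le_rsqrt assms(2) by blast
  then have "c / p \<le> sqrt p / p" using divide_right_mono assms(3) less_imp_le by blast
  also have "sqrt p / p = 1 / sqrt p"
  proof -
    have sp: "sqrt p > 0" using assms(3) by simp
    have e: "sqrt p * sqrt p = p" using assms(3) by simp
    show ?thesis using sp e by (simp add: field_simps)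
  qed
  finally show ?thesis .
qed

lemma main_bound:
  fixes V :: "'a set" and E :: "'a set set" and M :: nat and al be ga :: real
  assumes G: "simple_graph V E"
    and u0: "u0 \<in> V"
    and pos: "\<And>v. v \<in> V \<Longrightarrow> degree E v \<ge> 1"
    and bnd: "\<And>v. v \<in> V \<Longrightarrow> v \<noteq> u0 \<Longrightarrow> degree E v \<le> M"
    and al: "al \<ge> 0" and be: "be \<ge> 0" and ga: "ga \<ge> 0"
    and P1: "\<And>a b::nat. 1 \<le> a \<Longrightarrow> a \<le> M \<Longrightarrow> 1 \<le> b \<Longrightarrow> b \<le> M \<Longrightarrow>
       (al*(real a+real b)+2*be*real a*real b)^2 \<le> real a * real b"
    and P2: "\<And>a::nat. 1 \<le> a \<Longrightarrow> a \<le> M \<Longrightarrow>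
       real (degree E u0) * (al + (be + ga) * real a)^2 \<le> real a"
  shows "randic_index E \<ge> real (degree E u0) * ga + (real (card V) - 1) * al
            + be * (2 * real (card E) - real (degree E u0))"
proof -
  define w where "w x = (if x = u0 then ga else al / real (degree E x) + be)" for x
  have fV: "finite V" using G unfolding simple_graph_def by blast
  have fE: "finite E" using finE[OF G] .
  have edge: "(\<Sum>x\<in>e. w x) \<le> 1 / sqrt (\<Prod>u\<in>e. real (degree E u))" if e: "e \<in> E" for e
  proof -
    obtain x y where xy: "e = {x,y}" "x \<noteq> y" "x \<in> V" "y \<in> V" using edge2[OF G e] by blast
    consider (A) "x \<noteq> u0" "y \<noteq> u0" | (B) z where "e = {u0,z}" "z \<noteq> u0" "z \<in> V"
      using xy by (metis insert_commute)
    then show ?thesis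
    proof cases
      case A
      have S: "(\<Sum>x\<in>e. w x) = w x + w y" and P: "(\<Prod>u\<in>e. real (degree E u)) = real (degree E x) * real (degree E y)"
        using xy by auto
      have dx: "degree E x \<ge> 1" and dy: "degree E y \<ge> 1" using pos xy by auto
      have mx: "degree E x \<le> M" and my: "degree E y \<le> M" using bnd xy A by auto
      define a where "a = real (degree E x)"
      define b where "b = real (degree E y)"
      have ax: "a \<ge> 1" "b \<ge> 1" using dx dy a_def b_def by auto
      have "w x + w y = (al*(a+b)+2*be*a*b) / (a * b)"
        using A ax unfolding w_def a_def b_def by (simp add: field_simps)
      also have "\<dots> \<le> 1 / sqrt (a * b)"
      proof (rule frac_helper)
        show "0 \<le> al * (a + b) + 2 * be * a * b" using ax al be by simp
        show "(al * (a + b) + 2 * be * a * b)\<^sup>2 \<le> a * b"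
          using P1[OF dx mx dy my] unfolding a_def b_def .
        show "0 < a * b" using ax by simp
      qed
      finally show ?thesis using S P a_def b_def by simp
    next
      case B
      have S: "(\<Sum>x\<in>e. w x) = w u0 + w z" and P: "(\<Prod>u\<in>e. real (degree E u)) = real (degree E u0) * real (degree E z)"
        using B by auto
      have dz: "degree E z \<ge> 1" using pos B by auto
      have mz: "degree E z \<le> M" using bnd B by auto
      define a where "a = real (degree E z)"
      define D where "D = real (degree E u0)"
      have ax: "a \<ge> 1" "D \<ge> 1" using dz pos u0 a_def D_def by auto
      have "w u0 + w z = (al + (be+ga)*a) * D / (D * a)"
        using B ax unfolding w_def a_def D_def by (simp add: field_simps)
      also have "\<dots> \<le> 1 / sqrt (D * a)"
      proof (rule frac_helper)
        show "0 \<le> (al + (be+ga)*a) * D" using ax al be ga by simp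
        have p2: "D * (al + (be + ga) * a)^2 \<le> a" using P2[OF dz mz] unfolding a_def D_def .
        have "((al + (be+ga)*a) * D)^2 = D * (D * (al + (be + ga) * a)^2)"
          by (simp add: power2_eq_square)
        also have "\<dots> \<le> D * a" using p2 ax by (intro mult_left_mono) auto
        finally show "((al + (be+ga)*a) * D)^2 \<le> D * a" .
        show "0 < D * a" using ax by simp
      qed
      finally show ?thesis using S P a_def D_def by simp
    qed
  qed
  have "(\<Sum>e\<in>E. \<Sum>x\<in>e. w x) \<le> randic_index E"
    unfolding randic_index_def by (rule sum_mono) (rule edge)
  moreover have "(\<Sum>e\<in>E. \<Sum>x\<in>e. w x) = (\<Sum>x\<in>V. w x * real (degree E x))"
    using double_count[OF G, of w] by simp
  moreover have "(\<Sum>x\<in>V. w x * real (degree E x)) = w u0 * real (degree E u0) + (\<Sum>x\<in>V-{u0}. w x * real (degree E x))"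
    using fV u0 by (simp add: sum.remove)
  moreover have "(\<Sum>x\<in>V-{u0}. w x * real (degree E x)) = (\<Sum>x\<in>V-{u0}. al + be * real (degree E x))"
  proof (rule sum.cong)
    fix x assume x: "x \<in> V - {u0}"
    then have "real (degree E x) \<ge> 1" using pos by auto
    then show "w x * real (degree E x) = al + be * real (degree E x)"
      using x unfolding w_def by (simp add: field_simps)
  qed simp
  moreover have "(\<Sum>x\<in>V-{u0}. al + be * real (degree E x)) = (real (card V) - 1) * al + be * (\<Sum>x\<in>V-{u0}. real (degree E x))"
  proof -
    have "card V > 0" using fV u0 by (auto simp: card_gt_0_iff)
    then show ?thesis using fV u0 by (simp add: sum.distrib sum_distrib_left of_nat_diff)
  qed
  moreover have "(\<Sum>x\<in>V-{u0}. real (degree E x)) = 2 * real (card E) - real (degree E u0)"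
    using handshake[OF G] fV u0 by (simp add: sum.remove)
  moreover have "w u0 = ga" unfolding w_def by simp
  ultimately show ?thesis by (simp add: algebra_simps)
qed


lemma cases10: "1 \<le> (a::nat) \<Longrightarrow> a \<le> 10 \<Longrightarrow> a = 1 \<or> a = 2 \<or> a = 3 \<or> a = 4 \<or> a = 5 \<or> a = 6 \<or> a = 7 \<or> a = 8 \<or> a = 9 \<or> a = 10"
  by arith

lemma chkP11: "1 \<le> (a::nat) \<Longrightarrow> a \<le> 10 \<Longrightarrow> 1 \<le> (b::nat) \<Longrightarrow> b \<le> 10 \<Longrightarrow>
  (229/1000*(real a+real b)+2*(27/1000)*real a*real b)^2 \<le> real a * real b"
  apply (drule (1) cases10) apply (drule (1) cases10)
  apply (elim disjE) apply (simp_all add: power2_eq_square)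
  done

lemma chkG11: "1 \<le> (a::nat) \<Longrightarrow> a \<le> 10 \<Longrightarrow>
  11 * (229/1000 + (27/1000 + 45/1000) * real a)^2 \<le> real a"
  apply (drule (1) cases10)
  apply (elim disjE) apply (simp_all add: power2_eq_square)
  done

lemma chkP10: "1 \<le> (a::nat) \<Longrightarrow> a \<le> 10 \<Longrightarrow> 1 \<le> (b::nat) \<Longrightarrow> b \<le> 10 \<Longrightarrow>
  (24/100*(real a+real b)+2*(26/1000)*real a*real b)^2 \<le> real a * real b"
  apply (drule (1) cases10) apply (drule (1) cases10)
  apply (elim disjE) apply (simp_all add: power2_eq_square)
  done

lemma chkG10: "1 \<le> (a::nat) \<Longrightarrow> a \<le> 10 \<Longrightarrow>
  10 * (24/100 + (26/1000 + 5/100) * real a)^2 \<le> real a"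
  apply (drule (1) cases10)
  apply (elim disjE) apply (simp_all add: power2_eq_square)
  done

lemma chkP9: "1 \<le> (a::nat) \<Longrightarrow> a \<le> 9 \<Longrightarrow> 1 \<le> (b::nat) \<Longrightarrow> b \<le> 9 \<Longrightarrow>
  (1/4*(real a+real b)+2*(1/36)*real a*real b)^2 \<le> real a * real b"
  apply (drule cases10, simp) apply (drule cases10, simp)
  apply (elim disjE) apply (simp_all add: power2_eq_square)
  done

lemma chkG9: "1 \<le> (a::nat) \<Longrightarrow> a \<le> 9 \<Longrightarrow>
  9 * (1/4 + (1/36 + 1/18) * real a)^2 \<le> real a"
  apply (drule cases10, simp)
  apply (elim disjE) apply (simp_all add: power2_eq_square)
  done

lemma s11: "33166/10000 < sqrt 11" "sqrt 11 < 33167/10000"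
proof -
  show "33166/10000 < sqrt 11" by (rule real_less_rsqrt) (simp add: power2_eq_square)
  have "sqrt 11 < sqrt ((33167/10000)^2)" by (simp add: power2_eq_square)
  then show "sqrt 11 < 33167/10000" by simp
qed

lemma rhs_bound: "sqrt 11 + 2 * (real k + 1) / (12 * sqrt 11) < 33167/10000 + (5000/99498) * real k + 5000/99498"
proof -
  have "2 * (real k + 1) / (12 * sqrt 11) \<le> 2 * (real k + 1) / (12 * (33166/10000))"
    using s11(1) by (intro divide_left_mono) auto
  also have "\<dots> = (5000/99498) * real k + 5000/99498" by (simp add: field_simps)
  finally show ?thesis using s11(2) by linarith
qed

theorem lemma3p8:
  fixes V :: "'a set" and E :: "'a set set" and k :: nat
  assumes "simple_graph V E"
    and "connected_graph V E"
    and "card V = 12"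
    and "(max_degree V E = 11 \<and> card E = 12 + k \<and> 1 \<le> k \<and> k \<le> 8)
       \<or> (max_degree V E = 10 \<and> card E = 12 + k \<and> 4 \<le> k \<and> k \<le> 8)
       \<or> (max_degree V E = 9 \<and> card E = 12 + k \<and> 7 \<le> k \<and> k \<le> 8)"
  shows "randic_index E > sqrt 11 + 2 * (real k + 1) / (12 * sqrt 11)"
proof -
  note G = assms(1)
  have fV: "finite V" using G unfolding simple_graph_def by blast
  have Vne: "V \<noteq> {}" using assms(3) by auto
  have fin: "finite (degree E ` V)" "degree E ` V \<noteq> {}" using fV Vne by auto
  obtain u0 where u0: "u0 \<in> V" "degree E u0 = max_degree V E"
    using Max_in[OF fin] unfolding max_degree_def by auto
  have le: "degree E v \<le> max_degree V E" if "v \<in> V" for v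
    unfolding max_degree_def using Max_ge[OF fin(1)] that by auto
  have pos: "degree E v \<ge> 1" if "v \<in> V" for v
    using deg_pos[OF G assms(2) _ that] assms(3) by simp
  have rb: "sqrt 11 + 2 * (real k + 1) / (12 * sqrt 11) < 33167/10000 + (5000/99498) * real k + 5000/99498"
    by (rule rhs_bound)
  from assms(4) consider (c11) "max_degree V E = 11" "card E = 12 + k" "1 \<le> k" "k \<le> 8"
    | (c10) "max_degree V E = 10" "card E = 12 + k" "4 \<le> k" "k \<le> 8"
    | (c9) "max_degree V E = 9" "card E = 12 + k" "7 \<le> k" "k \<le> 8" by blast
  then show ?thesis
  proof cases
    case c11
    have bnd: "degree E v \<le> 10" if "v \<in> V" "v \<noteq> u0" for v
      using deg_sum_le[OF G, of u0 v] that c11 u0 by auto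
    have "randic_index E \<ge> real (degree E u0) * (45/1000) + (real (card V) - 1) * (229/1000)
            + (27/1000) * (2 * real (card E) - real (degree E u0))"
      apply (rule main_bound[OF G u0(1) pos bnd])
      using chkP11 chkG11 u0 c11 by auto
    then have "randic_index E \<ge> 11 * (45/1000) + 11 * (229/1000) + (27/1000) * (2 * (12 + real k) - 11)"
      using u0 c11 assms(3) by simp
    moreover have "real k \<ge> 1" "real k \<le> 8" using c11 by auto
    ultimately have "33167/10000 + (5000/99498) * real k + 5000/99498 \<le> randic_index E"
      by (simp add: field_simps)
    then show ?thesis using rb by linarith
  next
    case c10
    have bnd: "degree E v \<le> 10" if "v \<in> V" "v \<noteq> u0" for v
      using le that c10 by auto
    have "randic_index E \<ge> real (degree E u0) * (5/100) + (real (card V) - 1) * (24/100)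
            + (26/1000) * (2 * real (card E) - real (degree E u0))"
      apply (rule main_bound[OF G u0(1) pos bnd])
      using chkP10 chkG10 u0 c10 by auto
    then have "randic_index E \<ge> 10 * (5/100) + 11 * (24/100) + (26/1000) * (2 * (12 + real k) - 10)"
      using u0 c10 assms(3) by simp
    moreover have "real k \<ge> 4" "real k \<le> 8" using c10 by auto
    ultimately have "33167/10000 + (5000/99498) * real k + 5000/99498 \<le> randic_index E"
      by (simp add: field_simps)
    then show ?thesis using rb by linarith
  next
    case c9
    have bnd: "degree E v \<le> 9" if "v \<in> V" "v \<noteq> u0" for v
      using le that c9 by auto
    have "randic_index E \<ge> real (degree E u0) * (1/18) + (real (card V) - 1) * (1/4)
            + (1/36) * (2 * real (card E) - real (degree E u0))"
      apply (rule main_bound[OF G u0(1) pos bnd])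
      using chkP9 chkG9 u0 c9 by auto
    then have "randic_index E \<ge> 9 * (1/18) + 11 * (1/4) + (1/36) * (2 * (12 + real k) - 9)"
      using u0 c9 assms(3) by simp
    moreover have "real k \<ge> 7" "real k \<le> 8" using c9 by auto
    ultimately have "33167/10000 + (5000/99498) * real k + 5000/99498 \<le> randic_index E"
      by (simp add: field_simps)
    then show ?thesis using rb by linarith
  qed
qed

end
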